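(* Fix $\epsilon>0$ and suppose $p(1-p)n\ge(1+\epsilon)\log n$ for all sufficiently large $n$; let $d=\frac{np}{1-p}$. Then, with probability tending to $1$ as $n\to\infty$, $G(n,p)$ contains no closed set of size greater than $\frac n2+\frac{7n}{2\sqrt d}$.
   Context: $G(n,p)$ is the Erdős–Rényi random graph on $[n]$; $\Gamma(v)$ is the neighbourhood of $v$. A proper subset $S\subsetneq[n]$ is called closed if every $v\in[n]\setminus S$ satisfies $|\Gamma(v)\cap S|<|\Gamma(v)|/2$. *)

theory Defs
  imports "HOL-Probability.Probability"
begin

text \<open>Vertex set [n] is rendered as {..<n} = {0,...,n-1}. A graph on [n] is encoded by
  its edge indicator on the unordered pairs, represented as ordered pairs (i,j) with i<j<n.\<close>

definition vertex_pairs :: "nat \<Rightarrow> (nat \<times> nat) set" where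
  "vertex_pairs n = {(i, j). i < j \<and> j < n}"

definition gnp :: "nat \<Rightarrow> real \<Rightarrow> ((nat \<times> nat) \<Rightarrow> bool) pmf" where
  "gnp n p = Pi_pmf (vertex_pairs n) False (\<lambda>_. bernoulli_pmf p)"

definition adj :: "((nat \<times> nat) \<Rightarrow> bool) \<Rightarrow> nat \<Rightarrow> nat \<Rightarrow> bool" where
  "adj G u v \<longleftrightarrow> u \<noteq> v \<and> G (min u v, max u v)"

definition nbhd :: "nat \<Rightarrow> ((nat \<times> nat) \<Rightarrow> bool) \<Rightarrow> nat \<Rightarrow> nat set" where
  "nbhd n G v = {u \<in> {..<n}. adj G u v}"

definition closed_set :: "nat \<Rightarrow> ((nat \<times> nat) \<Rightarrow> bool) \<Rightarrow> nat set \<Rightarrow> bool" where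
  "closed_set n G S \<longleftrightarrow> S \<subset> {..<n} \<and>
     (\<forall>v \<in> {..<n} - S. real (card (nbhd n G v \<inter> S)) < real (card (nbhd n G v)) / 2)"

end

theory Submission
  imports Defs "HOL-Real_Asymp.Real_Asymp"
begin

lemma finite_vp[simp]: "finite (vertex_pairs n)"
  by (rule finite_subset[of _ "{..<n} \<times> {..<n}"]) (auto simp: vertex_pairs_def)

lemma vp_Suc: "vertex_pairs (Suc n) = vertex_pairs n \<union> (\<lambda>i. (i, n)) ` {..<n}"
  by (auto simp: vertex_pairs_def less_Suc_eq)

lemma pair_sum:
  fixes f :: "nat \<Rightarrow> nat \<Rightarrow> real"
  shows "(\<Sum>u<n. \<Sum>v<n. if u = v then 0 else f u v) = (\<Sum>e\<in>vertex_pairs n. f (fst e) (snd e) + f (snd e) (fst e))"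
proof (induction n)
  case 0
  then show ?case by (simp add: vertex_pairs_def)
next
  case (Suc n)
  have disj: "vertex_pairs n \<inter> (\<lambda>i. (i, n)) ` {..<n} = {}" by (auto simp: vertex_pairs_def)
  have "(\<Sum>e\<in>vertex_pairs (Suc n). f (fst e) (snd e) + f (snd e) (fst e))
      = (\<Sum>e\<in>vertex_pairs n. f (fst e) (snd e) + f (snd e) (fst e)) + (\<Sum>i<n. f i n + f n i)"
    unfolding vp_Suc by (subst sum.union_disjoint) (auto simp: disj sum.reindex inj_on_def)
  moreover have "(\<Sum>u<Suc n. \<Sum>v<Suc n. if u = v then 0 else f u v)
     = (\<Sum>u<n. \<Sum>v<n. if u = v then 0 else f u v) + (\<Sum>i<n. f i n + f n i)"
    by (simp add: sum.distrib)
  ultimately show ?case using Suc by simp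
qed

definition gT :: "nat set \<Rightarrow> nat \<Rightarrow> nat \<Rightarrow> real" where
  "gT T u v = of_bool (v \<in> T) * (if u \<in> T then -1 else 1)"

definition wT :: "nat set \<Rightarrow> nat \<times> nat \<Rightarrow> real" where
  "wT T e = gT T (fst e) (snd e) + gT T (snd e) (fst e)"

definition QT :: "nat \<Rightarrow> nat set \<Rightarrow> ((nat \<times> nat) \<Rightarrow> bool) \<Rightarrow> real" where
  "QT n T G = (\<Sum>e\<in>vertex_pairs n. wT T e * of_bool (G e))"

lemma adj_sym: "adj G u v = adj G v u"
  by (auto simp: adj_def min.commute max.commute)

lemma QT_alt: "QT n T G = (\<Sum>v<n. \<Sum>u<n. gT T u v * of_bool (adj G u v))"
proof -
  have "QT n T G = (\<Sum>e\<in>vertex_pairs n. gT T (fst e) (snd e) * of_bool (adj G (fst e) (snd e))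
        + gT T (snd e) (fst e) * of_bool (adj G (snd e) (fst e)))"
    unfolding QT_def wT_def
    by (intro sum.cong refl) (auto simp: vertex_pairs_def adj_def algebra_simps)
  also have "\<dots> = (\<Sum>u<n. \<Sum>v<n. if u = v then 0 else gT T u v * of_bool (adj G u v))"
    by (rule pair_sum[symmetric])
  also have "\<dots> = (\<Sum>u<n. \<Sum>v<n. gT T u v * of_bool (adj G u v))"
    by (intro sum.cong refl) (auto simp: adj_def)
  also have "\<dots> = (\<Sum>v<n. \<Sum>u<n. gT T u v * of_bool (adj G u v))"
    by (rule sum.swap)
  finally show ?thesis .
qed

lemma inner_closed:
  assumes S: "S \<subseteq> {..<n}" and T: "T = {..<n} - S" and v: "v \<in> T"
  shows "(\<Sum>u<n. gT T u v * of_bool (adj G u v))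
     = real (card (nbhd n G v \<inter> S)) - real (card (nbhd n G v \<inter> T))"
proof -
  have "(\<Sum>u<n. gT T u v * of_bool (adj G u v))
      = (\<Sum>u<n. of_bool (u \<in> nbhd n G v \<inter> S)) - (\<Sum>u<n. of_bool (u \<in> nbhd n G v \<inter> T))"
    unfolding sum_subtractf[symmetric]
    by (intro sum.cong refl) (use v T in \<open>auto simp: gT_def nbhd_def\<close>)
  also have "\<dots> = real (card (nbhd n G v \<inter> S)) - real (card (nbhd n G v \<inter> T))"
    proof -
    have e: "{..<n} \<inter> {u. u \<in> nbhd n G v \<inter> X} = nbhd n G v \<inter> X" for X by (auto simp: nbhd_def)
    show ?thesis by (subst (1 2) sum_of_bool_eq) (simp_all only: e finite_lessThan)
  qed
  finally show ?thesis .
qed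

lemma closed_QT:
  assumes "closed_set n G S" and T: "T = {..<n} - S"
  shows "QT n T G < 0"
proof -
  have S: "S \<subseteq> {..<n}" and Tne: "T \<noteq> {}" using assms unfolding closed_set_def by auto
  have "QT n T G = (\<Sum>v\<in>T. real (card (nbhd n G v \<inter> S)) - real (card (nbhd n G v \<inter> T)))"
  proof -
    have "QT n T G = (\<Sum>v<n. of_bool (v \<in> T) * (\<Sum>u<n. gT T u v * of_bool (adj G u v)))"
      unfolding QT_alt by (intro sum.cong refl) (auto simp: gT_def)
    also have "\<dots> = (\<Sum>v\<in>T. (\<Sum>u<n. gT T u v * of_bool (adj G u v)))"
      by (subst sum_of_bool_mult_eq) (auto intro!: sum.cong simp: T)
    also have "\<dots> = (\<Sum>v\<in>T. real (card (nbhd n G v \<inter> S)) - real (card (nbhd n G v \<inter> T)))"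
      by (intro sum.cong refl inner_closed[OF S T])
    finally show ?thesis .
  qed
  also have "\<dots> < (\<Sum>v\<in>T. 0)"
  proof (rule sum_strict_mono)
    show "finite T" using T by simp
    show "T \<noteq> {}" by fact
    fix v assume v: "v \<in> T"
    have fin: "finite (nbhd n G v)" by (simp add: nbhd_def)
    have "nbhd n G v = (nbhd n G v \<inter> S) \<union> (nbhd n G v \<inter> T)" using T by (auto simp: nbhd_def)
    hence "card (nbhd n G v) = card (nbhd n G v \<inter> S) + card (nbhd n G v \<inter> T)"
      using fin T by (metis card_Un_disjoint Diff_disjoint finite_Int inf_assoc inf_bot_right inf_commute)
    moreover have "real (card (nbhd n G v \<inter> S)) < real (card (nbhd n G v)) / 2"
      using assms(1) v T unfolding closed_set_def by auto
    ultimately show "real (card (nbhd n G v \<inter> S)) - real (card (nbhd n G v \<inter> T)) < 0" by simp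
  qed
  finally show ?thesis by simp
qed


lemma gT_sq: "(gT T u v)^2 = of_bool (v \<in> T)"
  by (auto simp: gT_def)

lemma sum_w:
  assumes T: "T \<subseteq> {..<n}"
  shows "(\<Sum>e\<in>vertex_pairs n. wT T e) = real (card T) * (real n - 2 * real (card T) + 1)"
proof -
  have cs: "(\<Sum>u<n. (if u \<in> T then -1 else 1::real)) = real n - 2 * real (card T)"
  proof -
    have "(\<Sum>u<n. (if u \<in> T then -1 else 1::real)) = (\<Sum>u<n. 1 - 2 * of_bool (u \<in> T))"
      by (intro sum.cong) auto
    also have "\<dots> = real n - 2 * (\<Sum>u<n. of_bool (u \<in> T))"
      by (simp add: sum_subtractf sum_distrib_left)
    also have "(\<Sum>u<n. of_bool (u \<in> T)::real) = real (card T)"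
      using T by (subst sum_of_bool_eq) (auto intro!: arg_cong[where f=card])
    finally show ?thesis .
  qed
  have "(\<Sum>e\<in>vertex_pairs n. wT T e) = (\<Sum>u<n. \<Sum>v<n. if u = v then 0 else gT T u v)"
    unfolding wT_def by (rule pair_sum[symmetric])
  also have "\<dots> = (\<Sum>v<n. \<Sum>u<n. if u = v then 0 else gT T u v)" by (rule sum.swap)
  also have "\<dots> = (\<Sum>v<n. of_bool (v \<in> T) * (real n - 2 * real (card T) + 1))"
  proof (intro sum.cong refl)
    fix v assume v: "v \<in> {..<n}"
    have "(\<Sum>u<n. if u = v then 0 else gT T u v) = (\<Sum>u<n. gT T u v) - gT T v v"
    proof -
      have a: "(\<Sum>u<n. gT T u v) = gT T v v + (\<Sum>u\<in>{..<n}-{v}. gT T u v)"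
        by (rule sum.remove[OF _ v]) simp
      have b: "(\<Sum>u<n. if u = v then 0 else gT T u v) = (if v = v then 0 else gT T v v) + (\<Sum>u\<in>{..<n}-{v}. if u = v then 0 else gT T u v)"
        by (rule sum.remove[OF _ v]) simp
      have c: "(\<Sum>u\<in>{..<n}-{v}. if u = v then 0 else gT T u v) = (\<Sum>u\<in>{..<n}-{v}. gT T u v)"
        by (rule sum.cong) auto
      show ?thesis using a b c by simp
    qed
    also have "(\<Sum>u<n. gT T u v) = of_bool (v \<in> T) * (\<Sum>u<n. (if u \<in> T then -1 else 1::real))"
      by (simp add: gT_def sum_distrib_left)
    finally show "(\<Sum>u<n. if u = v then 0 else gT T u v) = of_bool (v \<in> T) * (real n - 2 * real (card T) + 1)"
      using cs by (auto simp: gT_def)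
  qed
  also have "\<dots> = real (card T) * (real n - 2 * real (card T) + 1)"
    using T by (subst sum_distrib_right[symmetric], subst sum_of_bool_eq) (auto intro!: arg_cong[where f=card])
  finally show ?thesis .
qed

lemma sum_w2:
  assumes T: "T \<subseteq> {..<n}"
  shows "(\<Sum>e\<in>vertex_pairs n. (wT T e)^2) \<le> 2 * real (card T) * real n"
proof -
  have "(\<Sum>e\<in>vertex_pairs n. (wT T e)^2) \<le> (\<Sum>e\<in>vertex_pairs n. 2 * (gT T (fst e) (snd e))^2 + 2 * (gT T (snd e) (fst e))^2)"
  proof (intro sum_mono)
    fix e
    have "(a + b)^2 \<le> 2 * a^2 + 2 * b^2" for a b :: real
      using sum_squares_ge_zero[of "a - b" 0] by (simp add: power2_eq_square algebra_simps)
    thus "(wT T e)^2 \<le> 2 * (gT T (fst e) (snd e))^2 + 2 * (gT T (snd e) (fst e))^2"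
      unfolding wT_def by blast
  qed
  also have "\<dots> = (\<Sum>u<n. \<Sum>v<n. if u = v then 0 else 2 * (gT T u v)^2)"
    by (rule pair_sum[symmetric])
  also have "\<dots> \<le> (\<Sum>u<n. \<Sum>v<n. 2 * of_bool (v \<in> T))"
    by (intro sum_mono) (auto simp: gT_sq)
  also have "\<dots> = real n * (2 * real (card T))"
  proof -
    have "(\<Sum>v<n. 2 * of_bool (v \<in> T)::real) = 2 * real (card T)"
      using T by (simp add: sum_distrib_left[symmetric]) (auto intro!: arg_cong[where f=card])
    thus ?thesis by simp
  qed
  finally show ?thesis by (simp add: mult_ac)
qed

lemma expect_edge:
  assumes "0 \<le> p" "p \<le> 1" "e \<in> vertex_pairs n"
  shows "measure_pmf.expectation (gnp n p) (\<lambda>G. c * of_bool (G e)) = c * p"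
proof -
  have "measure_pmf.expectation (gnp n p) (\<lambda>G. c * of_bool (G e)) =
        measure_pmf.expectation (map_pmf (\<lambda>G. G e) (gnp n p)) (\<lambda>b. c * of_bool b)"
    by simp
  also have "map_pmf (\<lambda>G. G e) (gnp n p) = bernoulli_pmf p"
    using assms unfolding gnp_def by (subst Pi_pmf_component) auto
  also have "measure_pmf.expectation (bernoulli_pmf p) (\<lambda>b. c * of_bool b) = c * p"
    using assms by simp
  finally show ?thesis .
qed


lemma hoeff:
  assumes p: "0 \<le> p" "p \<le> 1" and T: "T \<subseteq> {..<n}" "T \<noteq> {}" and tn: "2 * card T < n"
  shows "measure_pmf.prob (gnp n p) {G. QT n T G \<le> 0}
           \<le> exp (- (p^2 * real (card T) * (real n - 2 * real (card T))^2 / real n))"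
proof -
  define t where "t = real (card T)"
  define \<mu> where "\<mu> = p * t * (real n - 2 * t + 1)"
  define D where "D = (\<Sum>e\<in>vertex_pairs n. (max 0 (wT T e) - min 0 (wT T e))^2)"
  have finT: "finite T" using T finite_subset by blast
  have t1: "t \<ge> 1" using T finT unfolding t_def by (simp add: Suc_leI card_gt_0_iff)
  have tn': "2 * t < real n" using tn unfolding t_def by linarith
  interpret H: Hoeffding_ineq "measure_pmf (gnp n p)" "vertex_pairs n"
     "\<lambda>e G. wT T e * of_bool (G e)" "\<lambda>e. min 0 (wT T e)" "\<lambda>e. max 0 (wT T e)" \<mu>
  proof unfold_locales
    show "finite (vertex_pairs n)" by simp
    show "prob_space.indep_vars (measure_pmf (gnp n p)) (\<lambda>_. borel) (\<lambda>e G. wT T e * of_bool (G e)) (vertex_pairs n)"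
      unfolding gnp_def
      by (intro prob_space.indep_vars_compose2[OF _ indep_vars_Pi_pmf, where Y="\<lambda>e b. wT T e * of_bool b"])
         (auto simp: measure_pmf.prob_space_axioms)
    fix e show "AE x in measure_pmf (gnp n p). wT T e * of_bool (x e) \<in> {min 0 (wT T e)..max 0 (wT T e)}"
      by (intro AE_I2) auto
  next
    have "(\<Sum>e\<in>vertex_pairs n. measure_pmf.expectation (gnp n p) (\<lambda>G. wT T e * of_bool (G e)))
          = (\<Sum>e\<in>vertex_pairs n. wT T e * p)"
      by (intro sum.cong refl expect_edge p)
    also have "\<dots> = \<mu>" unfolding \<mu>_def t_def
      using sum_w[OF T(1)] by (simp add: sum_distrib_left[symmetric] mult_ac)
    finally show "\<mu> \<equiv> (\<Sum>e\<in>vertex_pairs n. measure_pmf.expectation (gnp n p) (\<lambda>G. wT T e * of_bool (G e)))"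
      by simp
  qed
  have D_eq: "D = (\<Sum>e\<in>vertex_pairs n. (wT T e)^2)"
    unfolding D_def by (intro sum.cong refl) (auto simp: max_def min_def)
  have Dle: "D \<le> 2 * t * real n" unfolding D_eq t_def by (rule sum_w2[OF T(1)])
  have Dpos: "D > 0"
  proof -
    obtain v where v: "v \<in> T" using T by auto
    have "card T < card {..<n}" using tn by simp
    then obtain u where u: "u \<in> {..<n}" "u \<notin> T"
      using T(1) by (metis card_mono finite_lessThan not_le subsetI subset_antisym)
    have vn: "v < n" using v T by auto
    define e where "e = (min u v, max u v)"
    have e: "e \<in> vertex_pairs n" using u vn v unfolding e_def vertex_pairs_def by (cases "u = v") (auto simp: min_def max_def)
    have "wT T e = 1" using u v unfolding e_def wT_def gT_def by (auto simp: min_def max_def)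
    hence "0 < (wT T e)^2" by simp
    also have "\<dots> \<le> D" unfolding D_eq
      by (rule member_le_sum) (use e in auto)
    finally show ?thesis .
  qed
  have mu0: "\<mu> \<ge> 0" unfolding \<mu>_def using p t1 tn' by simp
  have "measure_pmf.prob (gnp n p) {G. QT n T G \<le> 0}
        = measure_pmf.prob (gnp n p) {x \<in> space (measure_pmf (gnp n p)). (\<Sum>e\<in>vertex_pairs n. wT T e * of_bool (x e)) \<le> \<mu> - \<mu>}"
    by (simp add: QT_def)
  also have "\<dots> \<le> exp (-2 * \<mu>^2 / D)"
    using H.Hoeffding_ineq_le[OF mu0] Dpos unfolding D_def by simp
  also have "\<dots> \<le> exp (- (p^2 * t * (real n - 2 * t)^2 / real n))"
  proof (subst exp_le_cancel_iff)
    have n0: "real n > 0" using tn' t1 by linarith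
    have A: "(p * t * (real n - 2 * t))^2 \<le> \<mu>^2"
      unfolding \<mu>_def using p t1 tn' by (intro power_mono) (auto intro!: mult_left_mono)
    have "p^2 * t * (real n - 2 * t)^2 / real n = (p * t * (real n - 2 * t))^2 / (t * real n)"
      using t1 n0 by (simp add: power2_eq_square divide_simps)
    also have "\<dots> \<le> \<mu>^2 / (t * real n)"
      using A t1 n0 by (intro divide_right_mono) auto
    also have "\<dots> = 2 * \<mu>^2 / (2 * t * real n)" using t1 n0 by simp
    also have "\<dots> \<le> 2 * \<mu>^2 / D"
      using Dle Dpos by (intro divide_left_mono) auto
    finally show "-2 * \<mu>^2 / D \<le> - (p^2 * t * (real n - 2 * t)^2 / real n)" by simp
  qed
  finally show ?thesis unfolding t_def .
qed


lemma finite_gnp: "finite (set_pmf (gnp n p))"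
  unfolding gnp_def
  by (rule finite_subset[OF set_Pi_pmf_subset']) (auto intro!: finite_PiE_dflt)

lemma mgf:
  assumes p: "0 \<le> p" "p \<le> 1" and l: "l \<ge> 0"
  shows "measure_pmf.prob (gnp n p) {G. QT n T G \<le> 0}
          \<le> (\<Prod>e\<in>vertex_pairs n. 1 - p + p * exp (- l * wT T e))"
proof -
  define f where "f e b = exp (- l * (wT T e * of_bool b))" for e b
  have eq: "exp (- l * QT n T G) = (\<Prod>e\<in>vertex_pairs n. f e (G e))" for G
    unfolding QT_def f_def sum_distrib_left by (rule exp_sum) simp
  have E: "measure_pmf.expectation (gnp n p) (\<lambda>G. exp (- l * QT n T G))
           = (\<Prod>e\<in>vertex_pairs n. 1 - p + p * exp (- l * wT T e))"
  proof -
    have "measure_pmf.expectation (gnp n p) (\<lambda>G. exp (- l * QT n T G))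
         = (\<Prod>e\<in>vertex_pairs n. measure_pmf.expectation (bernoulli_pmf p) (f e))"
      unfolding eq gnp_def
      by (subst expectation_prod_Pi_pmf)
         (auto simp: f_def intro!: integrable_measure_pmf_finite)
    also have "\<dots> = (\<Prod>e\<in>vertex_pairs n. 1 - p + p * exp (- l * wT T e))"
      using p by (intro prod.cong refl) (simp add: f_def algebra_simps)
    finally show ?thesis .
  qed
  have "measure_pmf.prob (gnp n p) {G. QT n T G \<le> 0}
        = measure_pmf.expectation (gnp n p) (indicator {G. QT n T G \<le> 0})"
    by simp
  also have "\<dots> \<le> measure_pmf.expectation (gnp n p) (\<lambda>G. exp (- l * QT n T G))"
  proof (rule integral_mono)
    show "integrable (measure_pmf (gnp n p)) (indicator {G. QT n T G \<le> 0} :: _ \<Rightarrow> real)"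
      by (intro integrable_measure_pmf_finite finite_gnp)
    show "integrable (measure_pmf (gnp n p)) (\<lambda>G. exp (- l * QT n T G))"
      by (intro integrable_measure_pmf_finite finite_gnp)
    fix G
    show "indicator {G. QT n T G \<le> 0} G \<le> exp (- l * QT n T G)"
    proof (cases "QT n T G \<le> 0")
      case True
      hence "- l * QT n T G \<ge> 0" using l mult_nonneg_nonpos[of l "QT n T G"] by simp
      thus ?thesis using True by simp
    qed simp
  qed
  also have "\<dots> = (\<Prod>e\<in>vertex_pairs n. 1 - p + p * exp (- l * wT T e))" by (rule E)
  finally show ?thesis .
qed


lemma exp_quad: "exp (z::real) \<le> 1 + z + z^2 * exp \<bar>z\<bar> / 2"
proof -
  obtain t where t: "\<bar>t\<bar> \<le> \<bar>z\<bar>" "exp z = (\<Sum>m<2. z ^ m / fact m) + exp t / fact 2 * z ^ 2"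
    using Maclaurin_exp_le[of z 2] by blast
  have "exp t \<le> exp \<bar>z\<bar>" using t(1) by simp
  hence "exp t * z^2 \<le> exp \<bar>z\<bar> * z^2" by (intro mult_right_mono) auto
  thus ?thesis using t(2) by (simp add: numeral_2_eq_2 algebra_simps)
qed

lemma bern_a:
  fixes p y :: real
  assumes "0 \<le> p" "p \<le> 1"
  shows "1 - p + p * exp y \<le> exp (p * (exp y - 1))"
  using exp_ge_add_one_self[of "p * (exp y - 1)"] by (simp add: algebra_simps)

lemma bern_b:
  fixes p y :: real
  assumes p: "0 \<le> p" "p \<le> 1"
  shows "1 - p + p * exp y \<le> exp (p * y + p * (1 - p) * y^2 * exp \<bar>y\<bar> / 2)"
proof -
  define q where "q = 1 - p"
  have q: "0 \<le> q" "p + q = 1" using p unfolding q_def by auto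
  have e1: "exp (- (p * y)) \<le> 1 - p * y + p^2 * y^2 * exp \<bar>y\<bar> / 2"
  proof -
    have "exp (- (p * y)) \<le> 1 + (- (p * y)) + (- (p * y))^2 * exp \<bar>- (p * y)\<bar> / 2" by (rule exp_quad)
    also have "exp \<bar>- (p * y)\<bar> \<le> exp \<bar>y\<bar>" using p by (simp add: abs_mult mult_left_le_one_le)
    hence "(- (p * y))^2 * exp \<bar>- (p * y)\<bar> / 2 \<le> p^2 * y^2 * exp \<bar>y\<bar> / 2"
      by (simp add: power_mult_distrib divide_right_mono mult_left_mono)
    finally show ?thesis by simp
  qed
  have e2: "exp (q * y) \<le> 1 + q * y + q^2 * y^2 * exp \<bar>y\<bar> / 2"
  proof -
    have "exp (q * y) \<le> 1 + q * y + (q * y)^2 * exp \<bar>q * y\<bar> / 2" by (rule exp_quad)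
    also have "exp \<bar>q * y\<bar> \<le> exp \<bar>y\<bar>" using q p unfolding q_def by (simp add: abs_mult mult_left_le_one_le)
    hence "(q * y)^2 * exp \<bar>q * y\<bar> / 2 \<le> q^2 * y^2 * exp \<bar>y\<bar> / 2"
      by (simp add: power_mult_distrib divide_right_mono mult_left_mono)
    finally show ?thesis by simp
  qed
  have "q * exp (- (p * y)) + p * exp (q * y)
        \<le> q * (1 - p * y + p^2 * y^2 * exp \<bar>y\<bar> / 2) + p * (1 + q * y + q^2 * y^2 * exp \<bar>y\<bar> / 2)"
    using e1 e2 q p by (intro add_mono mult_left_mono) auto
  also have "\<dots> = (p + q) + p * q * y^2 * exp \<bar>y\<bar> / 2 * (p + q)"
    by (simp add: algebra_simps power2_eq_square)
  also have "\<dots> \<le> exp (p * q * y^2 * exp \<bar>y\<bar> / 2)"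
    using q exp_ge_add_one_self by simp
  finally have A: "q * exp (- (p * y)) + p * exp (q * y) \<le> exp (p * q * y^2 * exp \<bar>y\<bar> / 2)" .
  have "1 - p + p * exp y = exp (p * y) * (q * exp (- (p * y)) + p * exp (q * y))"
    unfolding q_def by (simp add: algebra_simps exp_add[symmetric] exp_minus_inverse)
  also have "\<dots> \<le> exp (p * y) * exp (p * q * y^2 * exp \<bar>y\<bar> / 2)"
    by (intro mult_left_mono A) auto
  also have "\<dots> = exp (p * y + p * (1 - p) * y^2 * exp \<bar>y\<bar> / 2)"
    by (simp add: exp_add q_def)
  finally show ?thesis .
qed


lemma sum_skip:
  fixes h :: "nat \<Rightarrow> real"
  assumes v: "v < n"
  shows "(\<Sum>u<n. if u = v then 0 else h u) = (\<Sum>u<n. h u) - h v"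
proof -
  have a: "(\<Sum>u<n. h u) = h v + (\<Sum>u\<in>{..<n}-{v}. h u)"
    by (rule sum.remove) (use v in auto)
  have b: "(\<Sum>u<n. if u = v then 0 else h u) = (if v = v then 0 else h v) + (\<Sum>u\<in>{..<n}-{v}. if u = v then 0 else h u)"
    by (rule sum.remove) (use v in auto)
  have c: "(\<Sum>u\<in>{..<n}-{v}. if u = v then 0 else h u) = (\<Sum>u\<in>{..<n}-{v}. h u)"
    by (rule sum.cong) auto
  show ?thesis using a b c by simp
qed

lemma sum_w2_exact:
  assumes T: "T \<subseteq> {..<n}"
  shows "(\<Sum>e\<in>vertex_pairs n. (wT T e)^2) = real (card T) * (real n + real (card T) - 2)"
proof -
  define f where "f u v = (gT T u v)^2 + gT T u v * gT T v u" for u v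
  have ct: "(\<Sum>u<n. of_bool (u \<in> T)::real) = real (card T)"
    using T by (subst sum_of_bool_eq) (auto intro!: arg_cong[where f=card])
  have "(\<Sum>e\<in>vertex_pairs n. (wT T e)^2) = (\<Sum>e\<in>vertex_pairs n. f (fst e) (snd e) + f (snd e) (fst e))"
    unfolding wT_def f_def by (intro sum.cong refl) (simp add: power2_eq_square algebra_simps)
  also have "\<dots> = (\<Sum>u<n. \<Sum>v<n. if u = v then 0 else f u v)" by (rule pair_sum[symmetric])
  also have "\<dots> = (\<Sum>v<n. \<Sum>u<n. if u = v then 0 else f u v)" by (rule sum.swap)
  also have "\<dots> = (\<Sum>v<n. of_bool (v \<in> T) * (real n + real (card T) - 2))"
  proof (intro sum.cong refl)
    fix v assume v: "v \<in> {..<n}"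
    have fv: "f u v = of_bool (v \<in> T) * (1 + of_bool (u \<in> T))" for u
      by (auto simp: f_def gT_def)
    have "(\<Sum>u<n. if u = v then 0 else f u v) = (\<Sum>u<n. f u v) - f v v"
      using v by (intro sum_skip) auto
    also have "(\<Sum>u<n. f u v) = of_bool (v \<in> T) * (real n + real (card T))"
      unfolding fv by (simp add: sum_distrib_left[symmetric] sum.distrib ct)
    finally show "(\<Sum>u<n. if u = v then 0 else f u v) = of_bool (v \<in> T) * (real n + real (card T) - 2)"
      by (auto simp: fv)
  qed
  also have "\<dots> = real (card T) * (real n + real (card T) - 2)"
    by (simp add: sum_distrib_right[symmetric] ct)
  finally show ?thesis .
qed

lemma wT_cases: "wT T e = 0 \<or> wT T e = 1 \<or> wT T e = -2"
  by (auto simp: wT_def gT_def)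

lemma sum_F:
  fixes F :: "real \<Rightarrow> real"
  assumes T: "T \<subseteq> {..<n}" and F0: "F 0 = 0"
  shows "(\<Sum>e\<in>vertex_pairs n. F (wT T e))
    = real (card T) * (real n - real (card T)) * F 1 + real (card T) * (real (card T) - 1) / 2 * F (-2)"
proof -
  define a where "a = (4 * F 1 - F (-2)) / 6"
  define b where "b = (2 * F 1 + F (-2)) / 6"
  have Fw: "F (wT T e) = a * wT T e + b * (wT T e)^2" for e
    using wT_cases[of T e] F0 by (auto simp: a_def b_def field_simps)
  have "(\<Sum>e\<in>vertex_pairs n. F (wT T e)) = a * (\<Sum>e\<in>vertex_pairs n. wT T e) + b * (\<Sum>e\<in>vertex_pairs n. (wT T e)^2)"
    unfolding Fw by (simp add: sum.distrib sum_distrib_left)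
  also have "\<dots> = real (card T) * (real n - real (card T)) * F 1 + real (card T) * (real (card T) - 1) / 2 * F (-2)"
    unfolding sum_w[OF T] sum_w2_exact[OF T] a_def b_def by (simp add: field_simps)
  finally show ?thesis .
qed

lemma prod_exp_bound:
  fixes f g :: "'a \<Rightarrow> real"
  assumes "\<And>e. e \<in> A \<Longrightarrow> 0 \<le> f e \<and> f e \<le> exp (g e)" "finite A"
  shows "(\<Prod>e\<in>A. f e) \<le> exp (\<Sum>e\<in>A. g e)"
proof -
  have "(\<Prod>e\<in>A. f e) \<le> (\<Prod>e\<in>A. exp (g e))" by (rule prod_mono) (use assms in auto)
  also have "\<dots> = exp (\<Sum>e\<in>A. g e)" by (rule exp_sum[symmetric]) fact
  finally show ?thesis .
qed

lemma small_bound: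
  assumes p: "0 \<le> p" "p \<le> 1" and T: "T \<subseteq> {..<n}" and M: "M \<ge> 1"
  shows "measure_pmf.prob (gnp n p) {G. QT n T G \<le> 0}
     \<le> exp (- (p * real (card T) * ((real n - real (card T)) * (1 - 1 / M) - real (card T) * M^2 / 2)))"
proof -
  define t where "t = real (card T)"
  have t0: "t \<ge> 0" unfolding t_def by simp
  define l where "l = ln M"
  have l0: "l \<ge> 0" using M unfolding l_def by simp
  have e1: "exp (- l * 1) = 1 / M" using M by (simp add: l_def exp_minus divide_inverse)
  have e2: "exp (- l * (-2)) = M^2"
  proof -
    have "exp (- l * (-2)) = exp l * exp l" by (simp add: exp_add[symmetric])
    thus ?thesis using M by (simp add: l_def power2_eq_square)
  qed
  have "measure_pmf.prob (gnp n p) {G. QT n T G \<le> 0} \<le> (\<Prod>e\<in>vertex_pairs n. 1 - p + p * exp (- l * wT T e))"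
    by (rule mgf[OF p l0])
  also have "\<dots> \<le> exp (\<Sum>e\<in>vertex_pairs n. (\<lambda>w. p * (exp (- l * w) - 1)) (wT T e))"
    by (intro prod_exp_bound) (use p bern_a in \<open>auto intro!: add_nonneg_nonneg\<close>)
  also have "(\<Sum>e\<in>vertex_pairs n. (\<lambda>w. p * (exp (- l * w) - 1)) (wT T e))
      = t * (real n - t) * (p * (1 / M - 1)) + t * (t - 1) / 2 * (p * (M^2 - 1))"
    unfolding t_def by (subst sum_F[OF T]) (simp_all only: e1 e2, simp)
  also have "\<dots> \<le> - (p * t * ((real n - t) * (1 - 1 / M) - t * M^2 / 2))"
  proof -
    have d: "t * t * M^2 - t * (t - 1) * (M^2 - 1) = t * (t + M^2 - 1)" by (simp add: algebra_simps)
    have "M^2 \<ge> 1" using M by (simp add: one_le_power)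
    hence "t * (t + M^2 - 1) \<ge> 0" using t0 by simp
    hence "t * (t - 1) / 2 * (M^2 - 1) \<le> t * t / 2 * M^2" using d by (simp add: field_simps)
    hence "t * (t - 1) / 2 * (p * (M^2 - 1)) \<le> p * (t * t / 2 * M^2)"
      using p by (metis mult.left_commute mult_left_mono)
    thus ?thesis by (simp add: algebra_simps)
  qed
  finally show ?thesis unfolding t_def by simp
qed

lemma large_bound:
  assumes p: "0 \<le> p" "p \<le> 1" and T: "T \<subseteq> {..<n}" and l: "0 \<le> l" "l \<le> 1/2"
  shows "measure_pmf.prob (gnp n p) {G. QT n T G \<le> 0}
     \<le> exp (- (l * p * real (card T) * (real n - 2 * real (card T) + 1)) + 3 * p * (1 - p) * l^2 * real (card T) * real n)"
proof -
  define t where "t = real (card T)"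
  have pq: "p * (1 - p) \<ge> 0" using p by simp
  have "measure_pmf.prob (gnp n p) {G. QT n T G \<le> 0} \<le> (\<Prod>e\<in>vertex_pairs n. 1 - p + p * exp (- l * wT T e))"
    by (rule mgf[OF p l(1)])
  also have "\<dots> \<le> exp (\<Sum>e\<in>vertex_pairs n. p * (- l * wT T e) + p * (1 - p) * (- l * wT T e)^2 * exp \<bar>- l * wT T e\<bar> / 2)"
  proof (intro prod_exp_bound conjI)
    fix e
    show "1 - p + p * exp (- l * wT T e) \<le> exp (p * (- l * wT T e) + p * (1 - p) * (- l * wT T e)^2 * exp \<bar>- l * wT T e\<bar> / 2)"
      by (rule bern_b[OF p])
    show "0 \<le> 1 - p + p * exp (- l * wT T e)" using p by (intro add_nonneg_nonneg) auto
  qed simp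
  also have "\<dots> \<le> exp (\<Sum>e\<in>vertex_pairs n. p * (- l * wT T e) + p * (1 - p) * l^2 * (3 / 2) * (wT T e)^2)"
  proof (intro iffD2[OF exp_le_cancel_iff] sum_mono add_left_mono)
    fix e
    have "\<bar>- l * wT T e\<bar> \<le> 1" using wT_cases[of T e] l by auto
    hence "exp \<bar>- l * wT T e\<bar> \<le> 3" using exp_le by (meson exp_le_cancel_iff order_trans)
    hence "(p * (1 - p) * (l^2 * (wT T e)^2)) * exp \<bar>- l * wT T e\<bar> \<le> (p * (1 - p) * (l^2 * (wT T e)^2)) * 3"
      using pq by (intro mult_left_mono) auto
    moreover have "p * (1 - p) * (- l * wT T e)^2 * exp \<bar>- l * wT T e\<bar> / 2 = ((p * (1 - p) * (l^2 * (wT T e)^2)) * exp \<bar>- l * wT T e\<bar>) / 2"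
      by (simp add: power_mult_distrib mult_ac)
    moreover have "p * (1 - p) * l^2 * (3 / 2) * (wT T e)^2 = ((p * (1 - p) * (l^2 * (wT T e)^2)) * 3) / 2"
      by (simp add: mult_ac)
    ultimately show "p * (1 - p) * (- l * wT T e)^2 * exp \<bar>- l * wT T e\<bar> / 2 \<le> p * (1 - p) * l^2 * (3 / 2) * (wT T e)^2"
      by linarith
  qed
  also have "(\<Sum>e\<in>vertex_pairs n. p * (- l * wT T e) + p * (1 - p) * l^2 * (3 / 2) * (wT T e)^2)
       = - (l * p * (\<Sum>e\<in>vertex_pairs n. wT T e)) + p * (1 - p) * l^2 * (3/2) * (\<Sum>e\<in>vertex_pairs n. (wT T e)^2)"
  proof -
    define C where "C = p * (1 - p) * l^2 * (3/2)"
    have "(\<Sum>e\<in>vertex_pairs n. p * (- l * wT T e) + p * (1 - p) * l^2 * (3 / 2) * (wT T e)^2)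
       = (\<Sum>e\<in>vertex_pairs n. (- (l * p)) * wT T e + C * (wT T e)^2)"
      unfolding C_def by (intro sum.cong refl) (simp add: algebra_simps)
    also have "\<dots> = (- (l * p)) * (\<Sum>e\<in>vertex_pairs n. wT T e) + C * (\<Sum>e\<in>vertex_pairs n. (wT T e)^2)"
      by (simp only: sum.distrib sum_distrib_left)
    finally show ?thesis unfolding C_def by simp
  qed
  also have "\<dots> \<le> - (l * p * t * (real n - 2 * t + 1)) + 3 * p * (1 - p) * l^2 * t * real n"
  proof -
    have "p * (1 - p) * l^2 * (3/2) * (\<Sum>e\<in>vertex_pairs n. (wT T e)^2) \<le> p * (1 - p) * l^2 * (3/2) * (2 * t * real n)"
      unfolding t_def using pq by (intro mult_left_mono sum_w2[OF T]) auto
    thus ?thesis unfolding sum_w[OF T] t_def by (simp add: algebra_simps)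
  qed
  finally show ?thesis unfolding t_def by simp
qed


lemma small_T:
  fixes p e L :: real
  assumes p: "0 \<le> p" "p \<le> 1" and T: "T \<subseteq> {..<n}" and e: "0 < e" "e \<le> 1"
    and L: "L \<ge> 0" "p * real n \<ge> (1 + e) * L"
    and tc: "real (card T) \<le> e^3 / 512 * real n"
  shows "measure_pmf.prob (gnp n p) {G. QT n T G \<le> 0} \<le> exp (- ((1 + e / 2) * L)) ^ card T"
proof -
  define M where "M = 8 / e"
  define t where "t = real (card T)"
  have t0: "t \<ge> 0" unfolding t_def by simp
  have M1: "M \<ge> 1" using e unfolding M_def by (simp add: field_simps)
  have iM: "1 / M = e / 8" unfolding M_def by simp
  have n0: "real n \<ge> 0" by simp
  have e2: "e^2 \<le> 1" using e by (simp add: power_le_one)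
  have te: "t \<le> e / 16 * real n"
  proof -
    have "e^3 / 512 \<le> e / 16"
    proof -
      have "e^3 = e * e^2" by (simp add: power3_eq_cube power2_eq_square)
      also have "\<dots> \<le> e * 1" using e e2 by (intro mult_left_mono) auto
      finally show ?thesis using e by simp
    qed
    thus ?thesis using tc n0 unfolding t_def by (meson mult_right_mono order_trans)
  qed
  have tM: "t * M^2 / 2 \<le> e / 16 * real n"
  proof -
    have "t * M^2 / 2 = t * 32 / e^2" unfolding M_def using e by (simp add: power2_eq_square field_simps)
    also have "\<dots> \<le> (e^3 / 512 * real n) * 32 / e^2"
      using tc e unfolding t_def by (intro divide_right_mono mult_right_mono) auto
    also have "\<dots> = e / 16 * real n" using e by (simp add: power2_eq_square power3_eq_cube field_simps)
    finally show ?thesis .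
  qed
  have K: "(real n - t) * (1 - 1 / M) - t * M^2 / 2 \<ge> real n * (1 - e / 4)"
  proof -
    have "(real n - t) * (1 - 1 / M) = real n * (1 - e/8) - t * (1 - e/8)" unfolding iM by (rule left_diff_distrib)
    moreover have "t * (1 - e/8) \<le> t" using t0 e by (simp add: mult_left_le)
    ultimately show ?thesis using te tM by (simp add: algebra_simps)
  qed
  have pK: "p * t * ((real n - t) * (1 - 1 / M) - t * M^2 / 2) \<ge> t * ((1 + e / 2) * L)"
  proof -
    have "p * t * ((real n - t) * (1 - 1 / M) - t * M^2 / 2) \<ge> p * t * (real n * (1 - e / 4))"
      using K p t0 by (intro mult_left_mono) auto
    also have "p * t * (real n * (1 - e / 4)) = t * (1 - e/4) * (p * real n)" by (simp add: algebra_simps)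
    also have "\<dots> \<ge> t * (1 - e/4) * ((1 + e) * L)"
      using L t0 e by (intro mult_left_mono) auto
    also have "t * (1 - e/4) * ((1 + e) * L) \<ge> t * ((1 + e / 2) * L)"
    proof -
      have "(1 - e/4) * (1 + e) \<ge> 1 + e/2" 
      proof -
        have "e * e \<le> e * 1" using e by (intro mult_left_mono) auto
        moreover have "(1 - e/4) * (1 + e) = 1 + 3 * e / 4 - e * e / 4" by (simp add: field_simps)
        ultimately show ?thesis by linarith
      qed
      hence "(1 - e/4) * (1 + e) * L \<ge> (1 + e/2) * L" using L by (intro mult_right_mono) auto
      thus ?thesis using t0 by (metis mult.assoc mult_left_mono)
    qed
    finally show ?thesis by linarith
  qed
  have "measure_pmf.prob (gnp n p) {G. QT n T G \<le> 0}
     \<le> exp (- (p * t * ((real n - t) * (1 - 1 / M) - t * M^2 / 2)))"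
    using small_bound[OF p T M1] unfolding t_def .
  also have "\<dots> \<le> exp (- (t * ((1 + e / 2) * L)))" using pK by simp
  also have "\<dots> = exp (- ((1 + e / 2) * L)) ^ card T"
    unfolding t_def by (simp add: exp_of_nat_mult[symmetric])
  finally show ?thesis .
qed


lemma large_T:
  fixes p L c :: real
  assumes p: "0 < p" "p < 1" and T: "T \<subseteq> {..<n}" and L: "L \<ge> 5" "p * (1 - p) * real n \<ge> L"
    and cL: "c * L \<ge> 450" and c: "c > 0" and tc: "real (card T) > c * real n"
    and D: "real n - 2 * real (card T) > 0"
    and D2: "p * (real n - 2 * real (card T))^2 \<ge> 49 * real n * (1 - p)"
  shows "measure_pmf.prob (gnp n p) {G. QT n T G \<le> 0} \<le> exp (- (3/2 * real n))"
proof -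
  define t where "t = real (card T)"
  define N where "N = real n"
  define \<mu> where "\<mu> = p * t * (N - 2 * t + 1)"
  define V where "V = 3 * p * (1 - p) * t * N"
  have N0: "N \<ge> 0" unfolding N_def by simp
  have "c * N \<ge> 0" using c N0 by simp
  hence t0: "t > 0" using tc unfolding t_def N_def by linarith
  have Nt: "N - 2 * t > 0" using D unfolding N_def t_def .
  have N0': "N > 0" using Nt t0 by linarith
  have pq: "p * (1 - p) > 0" using p by simp
  have V0: "V > 0" unfolding V_def using pq t0 N0' by simp
  have pn: "p * N \<ge> L"
  proof -
    have "p * (1 - p) * N \<le> p * N" using p N0 by (simp add: mult_left_le algebra_simps)
    thus ?thesis using L unfolding N_def by linarith
  qed
  have mu_ge: "\<mu> \<ge> p * t * (N - 2 * t)" unfolding \<mu>_def using p t0 by (simp add: algebra_simps)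
  have "p * t * (N - 2 * t) \<ge> 0" using p t0 Nt by simp
  hence mu0: "\<mu> \<ge> 0" using mu_ge by linarith
  have key: "\<mu> \<ge> 6 * N \<and> \<mu>^2 \<ge> 6 * V * N"
  proof (cases "t \<le> 2 * N / 5")
    case True
    hence D5: "N - 2 * t \<ge> N / 5" by simp
    have pt: "p * t \<ge> 450"
    proof -
      have "p * t \<ge> p * (c * N)" using tc p unfolding t_def N_def by (intro mult_left_mono) auto
      also have "p * (c * N) = c * (p * N)" by simp
      also have "\<dots> \<ge> c * L" using pn c by (intro mult_left_mono) auto
      finally show ?thesis using cL by linarith
    qed
    have m1: "\<mu> \<ge> p * t * (N / 5)"
    proof -
      have "p * t * (N / 5) \<le> p * t * (N - 2 * t)" using D5 p t0 by (intro mult_left_mono) auto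
      thus ?thesis using mu_ge by linarith
    qed
    have i: "\<mu> \<ge> 6 * N"
    proof -
      have "p * t * (N / 5) \<ge> 450 * (N / 5)" using pt N0 by (intro mult_right_mono) auto
      thus ?thesis using m1 N0 by linarith
    qed
    have ii: "\<mu>^2 \<ge> 6 * V * N"
    proof -
      have "\<mu>^2 \<ge> (p * t * (N / 5))^2" using m1 p t0 N0 by (intro power_mono) auto
      also have "(p * t * (N / 5))^2 = (p * t) * (p * t) * N^2 / 25" by (simp add: power2_eq_square)
      also have "\<dots> \<ge> 450 * (p * t) * N^2 / 25"
        using pt p t0 by (intro divide_right_mono mult_right_mono) auto
      also have "450 * (p * t) * N^2 / 25 = 18 * p * t * N^2" by simp
      also have "18 * p * t * N^2 \<ge> 18 * (p * (1 - p)) * t * N^2"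
        using p t0 by (intro mult_right_mono) (auto simp: mult_left_le)
      also have "18 * (p * (1 - p)) * t * N^2 = 6 * V * N" unfolding V_def by (simp add: power2_eq_square)
      finally show ?thesis .
    qed
    show ?thesis using i ii by blast
  next
    case False
    hence t25: "t > 2 * N / 5" by simp
    have sq: "\<mu>^2 \<ge> 49 * (p * (1 - p)) * N * t^2"
    proof -
      have "\<mu>^2 \<ge> (p * t * (N - 2 * t))^2" using mu_ge p t0 Nt by (intro power_mono) auto
      also have "(p * t * (N - 2 * t))^2 = p * t^2 * (p * (N - 2 * t)^2)" by (simp add: power2_eq_square)
      also have "\<dots> \<ge> p * t^2 * (49 * N * (1 - p))"
        using D2 p unfolding N_def t_def by (intro mult_left_mono) auto
      also have "p * t^2 * (49 * N * (1 - p)) = 49 * (p * (1 - p)) * N * t^2" by simp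
      finally show ?thesis .
    qed
    have ii: "\<mu>^2 \<ge> 6 * V * N"
    proof -
      have "49 * t \<ge> 18 * N" using t25 N0 by linarith
      hence "((p * (1 - p)) * N * t) * (49 * t) \<ge> ((p * (1 - p)) * N * t) * (18 * N)"
        using pq N0 t0 by (intro mult_left_mono) auto
      hence "49 * (p * (1 - p)) * N * t^2 \<ge> 18 * (p * (1 - p)) * N * N * t"
        by (simp add: power2_eq_square mult_ac)
      also have "18 * (p * (1 - p)) * N * N * t = 6 * V * N" unfolding V_def by simp
      finally show ?thesis using sq by linarith
    qed
    have i: "\<mu> \<ge> 6 * N"
    proof -
      have "49 * (p * (1 - p)) * N * t^2 = 49 * (p * (1 - p) * N) * t^2" by simp
      also have "\<dots> \<ge> 49 * L * t^2" using L unfolding N_def by (intro mult_right_mono) auto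
      also have "49 * L * t^2 \<ge> 49 * 5 * (2 * N / 5)^2"
      proof -
        have "(2 * N / 5)^2 \<le> t^2" using t25 N0 by (intro power_mono) auto
        thus ?thesis using L by (intro mult_mono) auto
      qed
      also have "49 * 5 * (2 * N / 5)^2 \<ge> (6 * N)^2" by (simp add: power2_eq_square)
      finally have "(6 * N)^2 \<le> \<mu>^2" using sq by linarith
      thus ?thesis using mu0 by (rule power2_le_imp_le)
    qed
    show ?thesis using i ii by blast
  qed
  define l where "l = min (1/2) (\<mu> / (2 * V))"
  have l0: "0 \<le> l" "l \<le> 1/2" unfolding l_def using mu0 V0 by auto
  have lV: "V * l \<le> \<mu> / 2"
  proof -
    have "V * l \<le> V * (\<mu> / (2 * V))" using V0 unfolding l_def by (intro mult_left_mono) auto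
    thus ?thesis using V0 by simp
  qed
  have lmu: "l * \<mu> \<ge> 3 * N"
  proof (cases "1/2 \<le> \<mu> / (2 * V)")
    case True
    hence l: "l = 1/2" unfolding l_def by simp
    have "l * \<mu> = \<mu> / 2" unfolding l by simp
    moreover have "6 * N \<le> \<mu>" using key by blast
    ultimately show ?thesis by linarith
  next
    case False
    hence "l = \<mu> / (2 * V)" unfolding l_def by simp
    hence "l * \<mu> = \<mu>^2 / (2 * V)" by (simp add: power2_eq_square)
    also have "\<dots> \<ge> 6 * V * N / (2 * V)" using key V0 by (intro divide_right_mono) auto
    also have "6 * V * N / (2 * V) = 3 * N" using V0 by simp
    finally show ?thesis .
  qed
  have "measure_pmf.prob (gnp n p) {G. QT n T G \<le> 0}
     \<le> exp (- (l * p * t * (N - 2 * t + 1)) + 3 * p * (1 - p) * l^2 * t * N)"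
    using large_bound[OF _ _ T l0] p unfolding t_def N_def by simp
  also have "- (l * p * t * (N - 2 * t + 1)) + 3 * p * (1 - p) * l^2 * t * N = - (l * \<mu>) + l * (V * l)"
    unfolding \<mu>_def V_def by (simp add: power2_eq_square algebra_simps)
  also have "\<dots> \<le> - (l * \<mu>) / 2"
  proof -
    have "l * (V * l) \<le> l * (\<mu> / 2)" using lV l0 by (intro mult_left_mono) auto
    thus ?thesis by simp
  qed
  also have "\<dots> \<le> - (3/2 * real n)" using lmu unfolding N_def by simp
  finally show ?thesis by simp
qed


lemma pow_sum:
  fixes x :: real
  assumes "finite A"
  shows "(\<Sum>X\<in>Pow A. x ^ card X) = (1 + x) ^ card A"
proof -
  have "(1 + x) ^ card A = (\<Prod>a\<in>A. x + 1)" by (simp add: add.commute)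
  also have "\<dots> = (\<Sum>X\<in>Pow A. (\<Prod>a\<in>X. x) * (\<Prod>a\<in>A - X. 1))" by (rule prod_add) fact
  also have "\<dots> = (\<Sum>X\<in>Pow A. x ^ card X)" by simp
  finally show ?thesis by simp
qed

lemma bound_n:
  fixes p \<epsilon> e0 c L :: real
  assumes p01: "0 \<le> p" "p \<le> 1" and e0: "0 < e0" "e0 \<le> 1" "e0 \<le> \<epsilon>" and c_def: "c = e0^3 / 512"
    and L: "L = ln (real n)" "L \<ge> 5" "c * L \<ge> 450" and H: "p * (1 - p) * real n \<ge> (1 + \<epsilon>) * L"
  shows "measure_pmf.prob (gnp n p) {G. \<exists>S. closed_set n G S \<and>
            real (card S) > real n / 2 + 7 * real n / (2 * sqrt (real n * p / (1 - p)))}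
     \<le> exp (exp (- (e0 / 2) * ln (real n))) - 1 + (2 * exp (- 3 / 2)) ^ n"
proof -
  have n0: "n > 0" using L by (cases n) auto
  hence rn: "real n > 0" by simp
  have c0: "c > 0" unfolding c_def using e0 by simp
  have L0: "L > 0" using L by simp
  have "(1 + \<epsilon>) * L > 0" using e0 L0 by simp
  hence pq: "p * (1 - p) * real n > 0" using H by linarith
  hence pq': "p * (1 - p) > 0" using rn by (simp add: zero_less_mult_iff)
  have p: "0 < p" "p < 1" using pq' p01 by (auto simp: zero_less_mult_iff)
  define d where "d = real n * p / (1 - p)"
  have d0: "d > 0" unfolding d_def using p rn by simp
  define s where "s = sqrt d"
  have s0: "s > 0" unfolding s_def using d0 by simp
  define x where "x = exp (- ((1 + e0 / 2) * L))"
  have x0: "x \<ge> 0" unfolding x_def by simp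
  define ee where "ee = exp (- (3/2 * real n))"
  define \<T> where "\<T> = {T \<in> Pow {..<n}. T \<noteq> {} \<and> 7 * real n / s < real n - 2 * real (card T)}"
  have finT: "finite \<T>" unfolding \<T>_def by simp
  define E where "E = {G. \<exists>S. closed_set n G S \<and>
            real (card S) > real n / 2 + 7 * real n / (2 * sqrt (real n * p / (1 - p)))}"
  have sub: "E \<subseteq> (\<Union>T\<in>\<T>. {G. QT n T G \<le> 0})"
  proof
    fix G assume "G \<in> E"
    then obtain S where S: "closed_set n G S" "real (card S) > real n / 2 + 7 * real n / (2 * s)"
      unfolding E_def s_def d_def by auto
    define T where "T = {..<n} - S"
    have Ssub: "S \<subset> {..<n}" using S(1) unfolding closed_set_def by auto
    have cT: "card T = n - card S" unfolding T_def using Ssub by (subst card_Diff_subset) (auto intro: finite_subset)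
    have cS: "card S \<le> n" using Ssub by (metis card_lessThan card_mono finite_lessThan psubset_imp_subset)
    have Tne: "T \<noteq> {}" unfolding T_def using Ssub by auto
    have "2 * (7 * real n / (2 * s)) = 7 * real n / s" by simp
    hence "7 * real n / s < real n - 2 * real (card T)" using S(2) cS unfolding cT by (simp add: of_nat_diff)
    hence "T \<in> \<T>" unfolding \<T>_def T_def using Tne T_def by auto
    moreover have "QT n T G \<le> 0" using closed_QT[OF S(1) T_def] by simp
    ultimately show "G \<in> (\<Union>T\<in>\<T>. {G. QT n T G \<le> 0})" by blast
  qed
  have each: "measure_pmf.prob (gnp n p) {G. QT n T G \<le> 0} \<le> x ^ card T + ee" if T: "T \<in> \<T>" for T
  proof -
    have Tn: "T \<subseteq> {..<n}" and D: "7 * real n / s < real n - 2 * real (card T)" using T unfolding \<T>_def by auto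
    have D0: "real n - 2 * real (card T) > 0" using D s0 rn by (smt (verit) divide_pos_pos)
    have ee0: "ee \<ge> 0" "x ^ card T \<ge> 0" unfolding ee_def using x0 by auto
    have pnL: "p * real n \<ge> (1 + e0) * L"
    proof -
      have "p * (1 - p) * real n \<le> p * real n" using p rn by (simp add: mult_left_le algebra_simps)
      moreover have "(1 + e0) * L \<le> (1 + \<epsilon>) * L" using e0 L0 by (intro mult_right_mono) auto
      ultimately show ?thesis using H by linarith
    qed
    show ?thesis
    proof (cases "real (card T) \<le> e0^3 / 512 * real n")
      case True
      have "measure_pmf.prob (gnp n p) {G. QT n T G \<le> 0} \<le> x ^ card T"
        unfolding x_def by (rule small_T[OF p01 Tn e0(1,2) _ pnL True]) (use L0 in simp)
      thus ?thesis using ee0 by linarith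
    next
      case False
      have D2: "p * (real n - 2 * real (card T))^2 \<ge> 49 * real n * (1 - p)"
      proof -
        have "(7 * real n / s)^2 \<le> (real n - 2 * real (card T))^2"
          using D s0 rn by (intro power_mono) auto
        moreover have "(7 * real n / s)^2 = 49 * real n * (1 - p) / p"
          unfolding s_def using d0 rn p by (simp add: power_divide power_mult_distrib d_def field_simps power2_eq_square)
        ultimately have "49 * real n * (1 - p) / p \<le> (real n - 2 * real (card T))^2" by simp
        thus ?thesis using p by (simp add: field_simps)
      qed
      have "p * (1 - p) * real n \<ge> L"
      proof -
        have "(1 + \<epsilon>) * L \<ge> L" using e0 L0 by simp
        thus ?thesis using H by linarith
      qed
      hence "measure_pmf.prob (gnp n p) {G. QT n T G \<le> 0} \<le> ee"
        unfolding ee_def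
        by (intro large_T[OF p Tn L(2) _ L(3) c0 _ D0 D2]) (use False in \<open>auto simp: c_def\<close>)
      thus ?thesis using ee0 by linarith
    qed
  qed
  have "measure_pmf.prob (gnp n p) E \<le> measure_pmf.prob (gnp n p) (\<Union>T\<in>\<T>. {G. QT n T G \<le> 0})"
    by (intro measure_pmf.finite_measure_mono sub) auto
  also have "\<dots> \<le> (\<Sum>T\<in>\<T>. measure_pmf.prob (gnp n p) {G. QT n T G \<le> 0})"
    by (intro measure_pmf.finite_measure_subadditive_finite finT) auto
  also have "\<dots> \<le> (\<Sum>T\<in>\<T>. x ^ card T + ee)" by (intro sum_mono each)
  also have "\<dots> \<le> (\<Sum>T\<in>Pow {..<n} - {{}}. x ^ card T + ee)"
    by (intro sum_mono2) (auto simp: \<T>_def ee_def x0)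
  also have "\<dots> = (\<Sum>T\<in>Pow {..<n} - {{}}. x ^ card T) + real (card (Pow {..<n} - {{}})) * ee"
    by (simp add: sum.distrib)
  also have "(\<Sum>T\<in>Pow {..<n} - {{}}. x ^ card T) = (1 + x) ^ n - 1"
  proof -
    have "(\<Sum>T\<in>Pow {..<n}. x ^ card T) = x ^ card ({}::nat set) + (\<Sum>T\<in>Pow {..<n} - {{}}. x ^ card T)"
      by (rule sum.remove) auto
    thus ?thesis using pow_sum[of "{..<n}" x] by simp
  qed
  also have "real (card (Pow {..<n} - {{}})) * ee \<le> 2 ^ n * ee"
  proof -
    have "card (Pow {..<n} - {{}}) \<le> card (Pow {..<n::nat})" by (intro card_mono) auto
    also have "\<dots> = 2 ^ n" by (simp add: card_Pow)
    finally have "real (card (Pow {..<n} - {{}})) \<le> 2 ^ n" by (metis of_nat_le_iff of_nat_numeral of_nat_power)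
    thus ?thesis unfolding ee_def by (intro mult_right_mono) auto
  qed
  also have "2 ^ n * ee = (2 * exp (- 3 / 2)) ^ n"
  proof -
    have "ee = exp (- 3 / 2) ^ n" unfolding ee_def by (simp add: exp_of_nat_mult[symmetric] mult_ac)
    thus ?thesis by (simp add: power_mult_distrib)
  qed
  also have "(1 + x) ^ n - 1 \<le> exp (exp (- (e0 / 2) * ln (real n))) - 1"
  proof -
    have "(1 + x) ^ n \<le> exp x ^ n" using x0 by (intro power_mono) (auto simp: add.commute exp_ge_add_one_self)
    also have "exp x ^ n = exp (real n * x)" by (simp add: exp_of_nat_mult)
    also have "real n * x = exp (- (e0 / 2) * ln (real n))"
    proof -
      have "real n * x = exp (ln (real n)) * exp (- ((1 + e0 / 2) * L))" unfolding x_def using rn by simp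
      also have "\<dots> = exp (- (e0 / 2) * ln (real n))" unfolding L(1) by (simp add: exp_add[symmetric] algebra_simps)
      finally show ?thesis .
    qed
    finally show ?thesis by simp
  qed
  finally show ?thesis unfolding E_def by simp
qed


theorem mainTheorem4:
  fixes \<epsilon> :: real and p :: "nat \<Rightarrow> real"
  assumes "\<epsilon> > 0"
    and "\<And>n. 0 \<le> p n \<and> p n \<le> 1"
    and "\<forall>\<^sub>F n in sequentially. p n * (1 - p n) * real n \<ge> (1 + \<epsilon>) * ln (real n)"
  shows "(\<lambda>n. measure_pmf.prob (gnp n (p n))
            {G. \<not> (\<exists>S. closed_set n G S \<and>
                 real (card S) > real n / 2 + 7 * real n / (2 * sqrt (real n * p n / (1 - p n))))})
         \<longlonglongrightarrow> 1"
proof -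
  define e0 where "e0 = min \<epsilon> 1"
  have e0: "0 < e0" "e0 \<le> 1" "e0 \<le> \<epsilon>" using assms(1) unfolding e0_def by auto
  define c where "c = e0^3 / (512::real)"
  have c0: "c > 0" unfolding c_def using e0 by simp
  define P where "P n = {G. \<exists>S. closed_set n G S \<and>
                 real (card S) > real n / 2 + 7 * real n / (2 * sqrt (real n * p n / (1 - p n)))}" for n
  define B where "B n = exp (exp (- (e0 / 2) * ln (real n))) - 1 + (2 * exp (- 3 / 2)) ^ n" for n
  have B0: "B \<longlonglongrightarrow> 0"
  proof -
    have 1: "(\<lambda>n. exp (exp (-(e0/2) * ln (real n))) - 1) \<longlonglongrightarrow> 0"
      using e0(1) by real_asymp
    have 2: "(\<lambda>n. (2 * exp (-3/2::real)) ^ n) \<longlonglongrightarrow> 0"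
    proof (rule LIMSEQ_power_zero)
      have "exp (3/2::real) \<ge> 1 + 3/2" by (rule exp_ge_add_one_self)
      hence "2 * exp (-3/2::real) < 1" by (simp add: exp_minus field_simps)
      thus "norm (2 * exp (-3/2::real)) < 1" by simp
    qed
    show ?thesis unfolding B_def using tendsto_add[OF 1 2] by simp
  qed
  have ev2: "\<forall>\<^sub>F n in sequentially. ln (real n) \<ge> 5" by real_asymp
  have ev3: "\<forall>\<^sub>F n in sequentially. ln (real n) \<ge> 450 / c" by real_asymp
  have ev: "\<forall>\<^sub>F n in sequentially. measure_pmf.prob (gnp n (p n)) (P n) \<le> B n"
    using assms(3) ev2 ev3
  proof eventually_elim
    case (elim n)
    have "c * ln (real n) \<ge> c * (450 / c)" using elim(3) c0 by (intro mult_left_mono) auto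
    hence cL: "c * ln (real n) \<ge> 450" using c0 by simp
    show ?case unfolding P_def B_def
      by (rule bound_n[OF _ _ e0 c_def refl elim(2) cL elim(1)]) (use assms(2) in auto)
  qed
  have "(\<lambda>n. measure_pmf.prob (gnp n (p n)) (P n)) \<longlonglongrightarrow> 0"
  proof (rule tendsto_sandwich[OF _ ev tendsto_const B0])
    show "\<forall>\<^sub>F n in sequentially. 0 \<le> measure_pmf.prob (gnp n (p n)) (P n)" by simp
  qed
  hence "(\<lambda>n. 1 - measure_pmf.prob (gnp n (p n)) (P n)) \<longlonglongrightarrow> 1 - 0"
    by (intro tendsto_diff tendsto_const)
  moreover have "measure_pmf.prob (gnp n (p n))
            {G. \<not> (\<exists>S. closed_set n G S \<and>
                 real (card S) > real n / 2 + 7 * real n / (2 * sqrt (real n * p n / (1 - p n))))}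
        = 1 - measure_pmf.prob (gnp n (p n)) (P n)" for n
  proof -
    have "{G. \<not> (\<exists>S. closed_set n G S \<and>
                 real (card S) > real n / 2 + 7 * real n / (2 * sqrt (real n * p n / (1 - p n))))}
          = space (measure_pmf (gnp n (p n))) - P n" unfolding P_def by auto
    hence "measure_pmf.prob (gnp n (p n))
            {G. \<not> (\<exists>S. closed_set n G S \<and>
                 real (card S) > real n / 2 + 7 * real n / (2 * sqrt (real n * p n / (1 - p n))))}
          = measure_pmf.prob (gnp n (p n)) (space (measure_pmf (gnp n (p n))) - P n)" by (simp only:)
    also have "\<dots> = 1 - measure_pmf.prob (gnp n (p n)) (P n)"
      by (rule measure_pmf.prob_compl) simp
    finally show ?thesis .
  qed
  ultimately show ?thesis by simp
qed

end
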